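(* Let $\Omega\subset\mathbb{R}^n$ ($n\ge2$) be open bounded, $r_0>0$, $\alpha\in[0,n)$, and let $\mathcal{F},\mathcal{G}\in L^1(\Omega;\mathbb{R}^+)$ satisfy the local comparison $(A2_2)$ with constant $\tilde c$ and the global comparison $\fint_\Omega\mathcal{G}\le C_*\fint_\Omega\mathcal{F}$. Then for every $\varepsilon\in(0,1)$ one can find $\sigma_0=\sigma_0(n,\tilde c)>0$ and $\kappa=\kappa(\varepsilon)\in(0,\varepsilon)$ such that: if for some $\xi\in\Omega$ and $\varrho,\lambda>0$ there are $z_1,z_2\in\Omega_\varrho(\xi)$ with $\mathbf{M}_\alpha\mathcal{G}(z_1)\le\lambda$ and $\mathbf{M}_\alpha\mathcal{F}(z_2)\le\kappa\lambda$, then for all $\sigma>\sigma_0$, $$d^\alpha_{\mathcal{G}}(\Omega_\varrho(\xi);\sigma\lambda)\le C\Big(\frac\varepsilon\sigma\Big)^{\frac n{n-\alpha}}\varrho^n,$$ where $C=C(n,\alpha,\tilde c)>0$.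
   Context: Functions on $\Omega$ are extended by zero outside $\Omega$. $B_\rho(x)$ open ball, $\Omega_\rho(x)=B_\rho(x)\cap\Omega$, $\fint$ averages. $\mathbf{M}_\alpha f(x)=\sup_{\rho>0}\rho^\alpha\fint_{B_\rho(x)}|f|$, $d^\alpha_{\mathcal{G}}(E;\lambda)=\mathcal{L}^n(\{x\in E:\mathbf{M}_\alpha\mathcal{G}(x)>\lambda\})$. $(\mathcal{G},\varphi,\psi)\in\mathrm{Q}(B)$ with constant $\tilde c\ge1$ means $\mathcal{G}\le\tilde c(\varphi+\psi)$, $\varphi\le\tilde c(\mathcal{G}+\psi)$, $\psi\le\tilde c(\mathcal{G}+\varphi)$ in $B$. $(A2_2)$: for every $\nu\in\overline\Omega$, $r\in(0,r_0/2]$ there are measurable $\varphi,\psi$ on $\Omega_r(\nu)$ with $(\mathcal{G},\varphi,\psi)\in\mathrm{Q}(B_r(\nu))$ with constant $\tilde c$, $\fint_{B_r(\nu)}\psi\le\varepsilon\fint_{B_{2r}(\nu)}\mathcal{G}+c_\varepsilon\fint_{B_{2r}(\nu)}\mathcal{F}$ for all $\varepsilon\in(0,1)$ ($c_\varepsilon>0$ depending only on $\varepsilon$), and $\|\varphi\|_{L^\infty(B_r(\nu))}\le C\fint_{B_{2r}(\nu)}(\mathcal{G}+\mathcal{F})$ with $C$ independent of $\nu,r$. *)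

theory Defs
  imports "HOL-Analysis.Analysis"
begin

definition favg :: "('n::euclidean_space) set \<Rightarrow> ('n \<Rightarrow> real) \<Rightarrow> real" where
  "favg B f = (LINT x:B|lebesgue. f x) / measure lebesgue B"

definition frac_max :: "real \<Rightarrow> ('n::euclidean_space \<Rightarrow> real) \<Rightarrow> 'n \<Rightarrow> ereal" where
  "frac_max \<alpha> f x = (SUP \<rho>\<in>{0<..}. ereal (\<rho> powr \<alpha> * favg (ball x \<rho>) (\<lambda>y. \<bar>f y\<bar>)))"

definition dist_fn :: "real \<Rightarrow> ('n::euclidean_space \<Rightarrow> real) \<Rightarrow> 'n set \<Rightarrow> real \<Rightarrow> ennreal" where
  "dist_fn \<alpha> G E lam = emeasure lebesgue {x\<in>E. frac_max \<alpha> G x > ereal lam}"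

text \<open>The comparison class Q(B): (G, phi, psi) in Q(B) with constant c, on the set S
  (here S = Omega \<inter> B, the domain of phi, psi), required almost everywhere.\<close>
definition compQ :: "('n::euclidean_space \<Rightarrow> real) \<Rightarrow> ('n \<Rightarrow> real) \<Rightarrow> ('n \<Rightarrow> real) \<Rightarrow> 'n set \<Rightarrow> real \<Rightarrow> bool" where
  "compQ G \<phi> \<psi> S c \<longleftrightarrow>
     (AE x in lebesgue. x \<in> S \<longrightarrow>
        G x \<le> c * (\<phi> x + \<psi> x) \<and> \<phi> x \<le> c * (G x + \<psi> x) \<and> \<psi> x \<le> c * (G x + \<phi> x))"

definition A2_2 :: "'n::euclidean_space set \<Rightarrow> real \<Rightarrow> ('n \<Rightarrow> real) \<Rightarrow> ('n \<Rightarrow> real)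
                    \<Rightarrow> real \<Rightarrow> real \<Rightarrow> (real \<Rightarrow> real) \<Rightarrow> bool" where
  "A2_2 \<Omega> r0 F G ct CA ceps \<longleftrightarrow>
     (\<forall>e\<in>{0<..<1}. ceps e > 0) \<and>
     (\<forall>\<nu>\<in>closure \<Omega>. \<forall>r\<in>{0<..r0/2}.
        \<exists>\<phi> \<psi>. \<phi> \<in> borel_measurable lebesgue \<and> \<psi> \<in> borel_measurable lebesgue \<and>
          (AE x in lebesgue. x \<in> \<Omega> \<inter> ball \<nu> r \<longrightarrow> \<phi> x \<ge> 0 \<and> \<psi> x \<ge> 0) \<and>
          compQ G \<phi> \<psi> (\<Omega> \<inter> ball \<nu> r) ct \<and>
          (\<forall>e\<in>{0<..<1}.
             favg (ball \<nu> r) (\<lambda>x. indicator \<Omega> x * \<psi> x)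
               \<le> e * favg (ball \<nu> (2*r)) G + ceps e * favg (ball \<nu> (2*r)) F) \<and>
          (AE x in lebesgue. x \<in> \<Omega> \<inter> ball \<nu> r \<longrightarrow>
             \<bar>\<phi> x\<bar> \<le> CA * favg (ball \<nu> (2*r)) (\<lambda>y. G y + F y)))"

end

theory Submission
  imports Defs
begin

lemma ball_meas:
  fixes c :: "'a::euclidean_space"
  assumes "r \<ge> 0"
  shows "measure lebesgue (ball c r) = unit_ball_vol DIM('a) * r ^ DIM('a)"
  using content_ball[OF assms, of c] by (simp add: measure_completion)

lemma integrable_ind:
  fixes f :: "'a \<Rightarrow> real"
  shows "A \<in> sets M \<Longrightarrow> integrable M f \<Longrightarrow> integrable M (\<lambda>x. indicator A x * f x)"
  using integrable_mult_indicator[of A M f] by simp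

lemma int_mono_set:
  fixes f :: "'a::euclidean_space \<Rightarrow> real"
  assumes "integrable lebesgue f" "\<And>x. f x \<ge> 0" "A \<subseteq> B" "A \<in> sets lebesgue" "B \<in> sets lebesgue"
  shows "lebesgue_integral lebesgue (\<lambda>x. indicator A x * f x) \<le> lebesgue_integral lebesgue (\<lambda>x. indicator B x * f x)"
  apply (rule integral_mono)
  using assms by (auto intro: integrable_ind split: split_indicator)

lemma fm_le:
  assumes "frac_max \<alpha> f x \<le> ereal L" "r > 0"
  shows "r powr \<alpha> * favg (ball x r) (\<lambda>y. \<bar>f y\<bar>) \<le> L"
proof -
  have "ereal (r powr \<alpha> * favg (ball x r) (\<lambda>y. \<bar>f y\<bar>)) \<le> frac_max \<alpha> f x"
    unfolding frac_max_def using assms(2) by (intro SUP_upper) auto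
  then have "ereal (r powr \<alpha> * favg (ball x r) (\<lambda>y. \<bar>f y\<bar>)) \<le> ereal L" using assms(1) by (rule order_trans)
  then show ?thesis by simp
qed

lemma fm_gt:
  assumes "frac_max \<alpha> f x > ereal L"
  shows "\<exists>r>0. r powr \<alpha> * favg (ball x r) (\<lambda>y. \<bar>f y\<bar>) > L"
  using assms unfolding frac_max_def less_SUP_iff by auto

lemma favg_ball:
  fixes x :: "'a::euclidean_space"
  assumes "r > 0"
  shows "favg (ball x r) f = lebesgue_integral lebesgue (\<lambda>y. indicator (ball x r) y * f y) / (unit_ball_vol DIM('a) * r ^ DIM('a))"
  unfolding favg_def set_lebesgue_integral_def using ball_meas[of r x] assms by simp


lemma powr_superadd2:
  fixes a b q :: real
  assumes "a \<ge> 0" "b \<ge> 0" "q \<ge> 1"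
  shows "a powr q + b powr q \<le> (a + b) powr q"
proof -
  have k: "x powr q \<le> x * (a+b) powr (q-1)" if "0 \<le> x" "x \<le> a + b" for x
  proof (cases "x = 0")
    case True then show ?thesis by simp
  next
    case False
    then have "x powr q = x * x powr (q-1)" using that by (simp add: powr_mult_base)
    also have "\<dots> \<le> x * (a+b) powr (q-1)"
      using that assms by (intro mult_left_mono powr_mono2) auto
    finally show ?thesis .
  qed
  have "a powr q + b powr q \<le> a * (a+b) powr (q-1) + b * (a+b) powr (q-1)"
    using k[of a] k[of b] assms by auto
  also have "\<dots> = (a+b) * (a+b) powr (q-1)" by (simp add: algebra_simps)
  also have "\<dots> = (a+b) powr q"
  proof (cases "a + b = 0")
    case True then show ?thesis by simp
  next
    case False then show ?thesis using assms by (simp add: powr_mult_base)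
  qed
  finally show ?thesis .
qed

lemma powr_superadd:
  fixes a :: "'i \<Rightarrow> real" and q :: real
  assumes "finite D" "\<And>i. i \<in> D \<Longrightarrow> a i \<ge> 0" "q \<ge> 1"
  shows "(\<Sum>i\<in>D. a i powr q) \<le> (\<Sum>i\<in>D. a i) powr q"
  using assms
proof (induction D rule: finite_induct)
  case empty then show ?case by simp
next
  case (insert x F)
  have "(\<Sum>i\<in>insert x F. a i powr q) = a x powr q + (\<Sum>i\<in>F. a i powr q)"
    using insert by simp
  also have "\<dots> \<le> a x powr q + (\<Sum>i\<in>F. a i) powr q" using insert by auto
  also have "\<dots> \<le> (a x + (\<Sum>i\<in>F. a i)) powr q"
    using insert by (intro powr_superadd2) (auto intro: sum_nonneg)
  also have "\<dots> = (\<Sum>i\<in>insert x F. a i) powr q" using insert by simp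
  finally show ?case .
qed

lemma emeasure_ball_leb:
  fixes c :: "'a::euclidean_space"
  assumes "r \<ge> 0"
  shows "emeasure lebesgue (ball c r) = ennreal (unit_ball_vol DIM('a) * r ^ DIM('a))"
  using emeasure_ball[OF assms, of c] by (simp add: emeasure_completion)

lemma disjoint_int_sum:
  fixes f :: "'a::euclidean_space \<Rightarrow> real"
  assumes f: "integrable lebesgue f" and D: "finite D"
    and disj: "disjoint_family_on (\<lambda>i. ball (c i) (r i)) D"
  shows "(\<Sum>i\<in>D. lebesgue_integral lebesgue (\<lambda>y. indicator (ball (c i) (r i)) y * \<bar>f y\<bar>))
          \<le> lebesgue_integral lebesgue (\<lambda>y. \<bar>f y\<bar>)"
proof -
  have "(\<Sum>i\<in>D. lebesgue_integral lebesgue (\<lambda>y. indicator (ball (c i) (r i)) y * \<bar>f y\<bar>))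
        = lebesgue_integral lebesgue (\<lambda>y. (\<Sum>i\<in>D. indicator (ball (c i) (r i)) y) * \<bar>f y\<bar>)"
    unfolding sum_distrib_right
    by (subst Bochner_Integration.integral_sum) (auto intro!: integrable_ind integrable_abs f)
  also have "\<dots> \<le> lebesgue_integral lebesgue (\<lambda>y. \<bar>f y\<bar>)"
  proof (rule integral_mono)
    show "integrable lebesgue (\<lambda>y. (\<Sum>i\<in>D. indicator (ball (c i) (r i)) y) * \<bar>f y\<bar>)"
      unfolding sum_distrib_right by (auto intro!: integrable_ind integrable_abs f)
    show "integrable lebesgue (\<lambda>y. \<bar>f y\<bar>)" using f by auto
    fix y
    have "(\<Sum>i\<in>D. indicator (ball (c i) (r i)) y) \<le> (1::real)"
    proof (cases "\<exists>j\<in>D. y \<in> ball (c j) (r j)")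
      case True
      then obtain j where j: "j \<in> D" "y \<in> ball (c j) (r j)" by auto
      have "(\<Sum>i\<in>D. 1 * indicator (ball (c i) (r i)) y) = (1::real)"
        by (rule sum_indicator_disjoint_family[OF disj j(2) D j(1)])
      then show ?thesis by simp
    next
      case False
      then have "(\<Sum>i\<in>D. indicator (ball (c i) (r i)) y) = (0::real)"
        by (intro sum.neutral) (auto simp: indicator_def)
      then show ?thesis by simp
    qed
    then show "(\<Sum>i\<in>D. indicator (ball (c i) (r i)) y) * \<bar>f y\<bar> \<le> \<bar>f y\<bar>"
      by (simp add: mult_left_le_one_le sum_nonneg)
  qed
  finally show ?thesis .
qed


lemma weak_type:
  fixes f :: "'a::euclidean_space \<Rightarrow> real"
  assumes f: "integrable lebesgue f" and \<alpha>: "0 \<le> \<alpha>" "\<alpha> < real DIM('a)" and t: "t > 0"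
  and S: "\<And>x. x \<in> S \<Longrightarrow> \<exists>r>0. t * unit_ball_vol (real DIM('a)) * r powr (real DIM('a) - \<alpha>)
            < lebesgue_integral lebesgue (\<lambda>y. indicator (ball x r) y * \<bar>f y\<bar>)"
  shows "emeasure lebesgue S \<le> ennreal (5 ^ DIM('a) * unit_ball_vol (real DIM('a)) *
     (lebesgue_integral lebesgue (\<lambda>y. \<bar>f y\<bar>) / (t * unit_ball_vol (real DIM('a))))
        powr (real DIM('a) / (real DIM('a) - \<alpha>)))"
proof -
  define n where "n = real DIM('a)"
  define \<omega> where "\<omega> = unit_ball_vol (real DIM('a))"
  define N where "N = lebesgue_integral lebesgue (\<lambda>y. \<bar>f y\<bar>)"
  define q where "q = n / (n - \<alpha>)"
  define I where "I = (\<lambda>x r. lebesgue_integral lebesgue (\<lambda>y. indicator (ball x r) y * \<bar>f y\<bar>))"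
  define Bd where "Bd = 5 ^ DIM('a) * \<omega> * (N / (t * \<omega>)) powr q"
  have \<omega>: "\<omega> > 0" unfolding \<omega>_def by simp
  have n\<alpha>: "n - \<alpha> > 0" using \<alpha> unfolding n_def by simp
  have q1: "q \<ge> 1" unfolding q_def using n\<alpha> \<alpha> by simp
  have "\<forall>x\<in>S. \<exists>\<rho>. \<rho> > 0 \<and> t * \<omega> * \<rho> powr (n - \<alpha>) < I x \<rho>"
    using S unfolding I_def \<omega>_def n_def by blast
  from bchoice[OF this] obtain r where r: "\<And>x. x \<in> S \<Longrightarrow> r x > 0 \<and> t * \<omega> * r x powr (n - \<alpha>) < I x (r x)"
    by blast
  have IleN: "I x \<rho> \<le> N" for x \<rho>
    unfolding I_def N_def
    using integrable_ind[OF _ integrable_abs[OF f], of "ball x \<rho>"]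
    by (intro integral_mono) (auto simp: f split: split_indicator)
  have rp: "r x powr (n - \<alpha>) < N / (t * \<omega>)" if "x \<in> S" for x
  proof -
    have "t * \<omega> * r x powr (n - \<alpha>) < N" using r[OF that] IleN[of x "r x"] by linarith
    then show ?thesis using t \<omega> by (simp add: field_simps)
  qed
  define B where "B = (N / (t * \<omega>)) powr (1 / (n - \<alpha>))"
  have rB: "r x \<le> B" if "x \<in> S" for x
  proof -
    have "r x = (r x powr (n - \<alpha>)) powr (1 / (n - \<alpha>))"
      using r[OF that] n\<alpha> by (simp add: powr_powr)
    also have "\<dots> \<le> B" unfolding B_def
      using rp[OF that] n\<alpha> by (intro powr_mono2) auto
    finally show ?thesis .
  qed
  have cov: "S \<subseteq> (\<Union>x\<in>S. ball ((\<lambda>x. x) x) (r x))"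
  proof
    fix x assume "x \<in> S" then show "x \<in> (\<Union>x\<in>S. ball ((\<lambda>x. x) x) (r x))"
      using r[of x] by (intro UN_I[of x]) auto
  qed
  have rb': "\<And>i. i \<in> S \<Longrightarrow> 0 < r i \<and> r i \<le> B" using r rB by auto
  obtain C where C: "countable C" "C \<subseteq> S"
     "pairwise (\<lambda>i j. disjnt (ball i (r i)) (ball j (r j))) C"
     "S \<subseteq> (\<Union>i\<in>C. ball i (5 * r i))"
    by (rule Vitali_covering_lemma_balls[OF cov rb']) auto
  have fin: "(\<Sum>i\<in>D. \<omega> * (5 * r i) ^ DIM('a)) \<le> Bd" if D: "finite D" "D \<subseteq> C" for D
  proof -
    have disj: "disjoint_family_on (\<lambda>i. ball i (r i)) D"
      using C(3) D(2) unfolding pairwise_def disjnt_def disjoint_family_on_def by blast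
    have "(\<Sum>i\<in>D. t * \<omega> * r i powr (n - \<alpha>)) \<le> (\<Sum>i\<in>D. I i (r i))"
      using r C(2) D(2) by (intro sum_mono) (auto intro: less_imp_le)
    also have "\<dots> \<le> N" unfolding I_def N_def
      using disjoint_int_sum[OF f D(1), of "\<lambda>i. i" r] disj by simp
    finally have "t * \<omega> * (\<Sum>i\<in>D. r i powr (n - \<alpha>)) \<le> N"
      by (simp add: sum_distrib_left)
    then have s1: "(\<Sum>i\<in>D. r i powr (n - \<alpha>)) \<le> N / (t * \<omega>)"
      using t \<omega> by (simp add: field_simps)
    have "(\<Sum>i\<in>D. \<omega> * (5 * r i) ^ DIM('a)) = 5 ^ DIM('a) * \<omega> * (\<Sum>i\<in>D. (r i powr (n - \<alpha>)) powr q)"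
    proof -
      have "(r i powr (n - \<alpha>)) powr q = r i ^ DIM('a)" if "i \<in> D" for i
      proof -
        have "(r i powr (n - \<alpha>)) powr q = r i powr n"
          using n\<alpha> unfolding q_def by (simp add: powr_powr)
        also have "\<dots> = r i ^ DIM('a)" unfolding n_def
          using r that D C(2) by (subst powr_realpow) auto
        finally show ?thesis .
      qed
      then show ?thesis
        by (simp add: sum_distrib_left power_mult_distrib algebra_simps)
    qed
    also have "\<dots> \<le> 5 ^ DIM('a) * \<omega> * (\<Sum>i\<in>D. r i powr (n - \<alpha>)) powr q"
      using \<omega> D q1 by (intro mult_left_mono powr_superadd) auto
    also have "\<dots> \<le> Bd" unfolding Bd_def
      using \<omega> q1 s1 by (intro mult_left_mono powr_mono2) (auto intro: sum_nonneg)
    finally show ?thesis .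
  qed
  define U where "U = (\<Union>i\<in>C. ball i (5 * r i))"
  have Usets: "U \<in> sets lebesgue" unfolding U_def
    using C(1) by (intro sets.countable_UN') auto
  have "emeasure lebesgue U \<le> ennreal Bd"
  proof (cases "C = {}")
    case True then show ?thesis unfolding U_def by simp
  next
    case False
    define g where "g = from_nat_into C"
    have rg: "range g = C" unfolding g_def using range_from_nat_into[OF False C(1)] .
    define A where "A = (\<lambda>k. \<Union>i\<in>g ` {..k}. ball i (5 * r i))"
    have "U = (\<Union>k. A k)"
    proof
      show "U \<subseteq> (\<Union>k. A k)"
      proof
        fix x assume "x \<in> U"
        then obtain i where i: "i \<in> C" "x \<in> ball i (5 * r i)" unfolding U_def by blast
        then obtain k where "i = g k" using rg by blast
        then show "x \<in> (\<Union>k. A k)" unfolding A_def using i by blast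
      qed
      show "(\<Union>k. A k) \<subseteq> U" unfolding A_def U_def using rg by blast
    qed
    moreover have "range A \<subseteq> sets lebesgue"
    proof -
      have "A k \<in> sets lebesgue" for k unfolding A_def
        by (rule sets.finite_UN) auto
      then show ?thesis by blast
    qed
    moreover have "incseq A" unfolding A_def incseq_def
      by (intro allI impI UN_mono image_mono) auto
    ultimately have "emeasure lebesgue U = (SUP k. emeasure lebesgue (A k))"
      using SUP_emeasure_incseq by metis
    also have "\<dots> \<le> ennreal Bd"
    proof (rule SUP_least)
      fix k
      have "emeasure lebesgue (A k) \<le> (\<Sum>i\<in>g ` {..k}. emeasure lebesgue (ball i (5 * r i)))"
        unfolding A_def by (rule emeasure_subadditive_finite) auto
      also have "\<dots> = (\<Sum>i\<in>g ` {..k}. ennreal (\<omega> * (5 * r i) ^ DIM('a)))"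
        unfolding \<omega>_def
      proof (intro sum.cong refl emeasure_ball_leb)
        fix i assume "i \<in> g ` {..k}"
        then have "i \<in> S" using rg C(2) by blast
        then show "0 \<le> 5 * r i" using r[of i] by simp
      qed
      also have "\<dots> = ennreal (\<Sum>i\<in>g ` {..k}. \<omega> * (5 * r i) ^ DIM('a))"
      proof (rule sum_ennreal)
        fix i assume "i \<in> g ` {..k}"
        then have "i \<in> S" using rg C(2) by blast
        then show "0 \<le> \<omega> * (5 * r i) ^ DIM('a)" using r[of i] \<omega> by simp
      qed
      also have "\<dots> \<le> ennreal Bd"
        using rg by (intro ennreal_leI fin) auto
      finally show "emeasure lebesgue (A k) \<le> ennreal Bd" .
    qed
    finally show ?thesis .
  qed
  moreover have "emeasure lebesgue S \<le> emeasure lebesgue U"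
    using C(4) Usets unfolding U_def by (intro emeasure_mono) auto
  ultimately have "emeasure lebesgue S \<le> ennreal Bd" by (meson order_trans)
  then show ?thesis unfolding Bd_def N_def \<omega>_def q_def n_def .
qed


lemma fm_int:
  fixes f :: "'a::euclidean_space \<Rightarrow> real"
  assumes "frac_max \<alpha> f z \<le> ereal L" "r > 0"
  shows "lebesgue_integral lebesgue (\<lambda>y. indicator (ball z r) y * \<bar>f y\<bar>)
           \<le> L * unit_ball_vol (real DIM('a)) * r ^ DIM('a) / r powr \<alpha>"
proof -
  define I where "I = lebesgue_integral lebesgue (\<lambda>y. indicator (ball z r) y * \<bar>f y\<bar>)"
  define V where "V = unit_ball_vol (real DIM('a)) * r ^ DIM('a)"
  have V: "V > 0" unfolding V_def using assms(2) by simp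
  have "r powr \<alpha> * (I / V) \<le> L"
    using fm_le[OF assms] favg_ball[OF assms(2), of z] unfolding I_def V_def by simp
  then have "I \<le> L * V / r powr \<alpha>"
    using V assms(2) by (simp add: field_simps)
  then show ?thesis unfolding I_def V_def by (simp add: mult.assoc)
qed

lemma fm_gt_int:
  fixes f :: "'a::euclidean_space \<Rightarrow> real"
  assumes "frac_max \<alpha> f x > ereal L"
  shows "\<exists>r>0. L * unit_ball_vol (real DIM('a)) * r ^ DIM('a) / r powr \<alpha>
           < lebesgue_integral lebesgue (\<lambda>y. indicator (ball x r) y * \<bar>f y\<bar>)"
proof -
  obtain r where r: "r > 0" "r powr \<alpha> * favg (ball x r) (\<lambda>y. \<bar>f y\<bar>) > L"
    using fm_gt[OF assms] by blast
  define I where "I = lebesgue_integral lebesgue (\<lambda>y. indicator (ball x r) y * \<bar>f y\<bar>)"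
  define V where "V = unit_ball_vol (real DIM('a)) * r ^ DIM('a)"
  have V: "V > 0" unfolding V_def using r by simp
  have "r powr \<alpha> * (I / V) > L"
    using r favg_ball[OF r(1), of x] unfolding I_def V_def by simp
  then have "I > L * V / r powr \<alpha>"
    using V r by (simp add: field_simps)
  then show ?thesis unfolding I_def V_def using r by (auto simp: mult.assoc)
qed

lemma pow_div_powr:
  assumes "r > 0"
  shows "r ^ k / r powr \<alpha> = r powr (real k - \<alpha>)"
  using assms by (simp add: powr_diff powr_realpow)


lemma large_case:
  fixes F G :: "'a::euclidean_space \<Rightarrow> real"
  assumes \<alpha>: "0 \<le> \<alpha>" "\<alpha> < real DIM('a)"
    and Fi: "integrable lebesgue F" and Gi: "integrable lebesgue G"
    and nn: "\<And>x. F x \<ge> 0 \<and> G x \<ge> 0" and out: "\<And>x. x \<notin> \<Omega> \<Longrightarrow> F x = 0"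
    and D: "D > 0" "\<Omega> \<subseteq> ball z2 D"
    and z2: "frac_max \<alpha> F z2 \<le> ereal (\<kappa> * lam)"
    and lam: "lam > 0" and \<sigma>: "\<sigma> > 0" and \<kappa>: "\<kappa> > 0" and \<rho>: "\<rho> > 0" and \<epsilon>: "\<epsilon> > 0"
    and F0: "lebesgue_integral lebesgue F = 0 \<Longrightarrow> lebesgue_integral lebesgue G = 0"
    and Fp: "lebesgue_integral lebesgue F > 0 \<Longrightarrow>
        lebesgue_integral lebesgue G * \<kappa> * D ^ DIM('a) / D powr \<alpha>
          \<le> \<epsilon> * \<rho> powr (real DIM('a) - \<alpha>) * lebesgue_integral lebesgue F"
  shows "emeasure lebesgue {x\<in>S. frac_max \<alpha> G x > ereal (\<sigma> * lam)}
     \<le> ennreal (5 ^ DIM('a) * unit_ball_vol (real DIM('a)) *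
          (\<epsilon> / \<sigma>) powr (real DIM('a) / (real DIM('a) - \<alpha>)) * \<rho> ^ DIM('a))"
proof -
  define n where "n = real DIM('a)"
  define \<omega> where "\<omega> = unit_ball_vol (real DIM('a))"
  define q where "q = n / (n - \<alpha>)"
  define NG where "NG = lebesgue_integral lebesgue G"
  define mF where "mF = lebesgue_integral lebesgue F"
  have \<omega>: "\<omega> > 0" unfolding \<omega>_def by simp
  have n\<alpha>: "n - \<alpha> > 0" using \<alpha> unfolding n_def by simp
  have q1: "q \<ge> 1" unfolding q_def using n\<alpha> \<alpha> by simp
  have absG: "(\<lambda>y. \<bar>G y\<bar>) = G" using nn by (auto simp: abs_of_nonneg)
  have NG0: "NG \<ge> 0" unfolding NG_def using nn by (simp add: integral_nonneg)
  have mF0: "mF \<ge> 0" unfolding mF_def using nn by (simp add: integral_nonneg)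
  have W: "emeasure lebesgue {x\<in>S. frac_max \<alpha> G x > ereal (\<sigma> * lam)}
     \<le> ennreal (5 ^ DIM('a) * \<omega> * (NG / ((\<sigma> * lam) * \<omega>)) powr q)"
  proof -
    have "emeasure lebesgue {x\<in>S. frac_max \<alpha> G x > ereal (\<sigma> * lam)}
     \<le> ennreal (5 ^ DIM('a) * unit_ball_vol (real DIM('a)) *
     (lebesgue_integral lebesgue (\<lambda>y. \<bar>G y\<bar>) / ((\<sigma> * lam) * unit_ball_vol (real DIM('a))))
        powr (real DIM('a) / (real DIM('a) - \<alpha>)))"
    proof (rule weak_type[OF Gi \<alpha>])
      show "0 < \<sigma> * lam" using \<sigma> lam by simp
      fix x assume "x \<in> {x\<in>S. frac_max \<alpha> G x > ereal (\<sigma> * lam)}"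
      then obtain r where r: "r > 0" "\<sigma> * lam * unit_ball_vol (real DIM('a)) * r ^ DIM('a) / r powr \<alpha>
           < lebesgue_integral lebesgue (\<lambda>y. indicator (ball x r) y * \<bar>G y\<bar>)"
        using fm_gt_int[of "\<sigma> * lam" \<alpha> G x] by auto
      have "\<sigma> * lam * unit_ball_vol (real DIM('a)) * r ^ DIM('a) / r powr \<alpha>
          = \<sigma> * lam * unit_ball_vol (real DIM('a)) * r powr (real DIM('a) - \<alpha>)"
        using pow_div_powr[OF r(1), of "DIM('a)" \<alpha>] by (metis times_divide_eq_right)
      then show "\<exists>r>0. \<sigma> * lam * unit_ball_vol (real DIM('a)) * r powr (real DIM('a) - \<alpha>)
            < lebesgue_integral lebesgue (\<lambda>y. indicator (ball x r) y * \<bar>G y\<bar>)"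
        using r by auto
    qed
    then show ?thesis unfolding absG NG_def \<omega>_def q_def n_def .
  qed
  have key: "NG / ((\<sigma> * lam) * \<omega>) \<le> (\<epsilon> / \<sigma>) * \<rho> powr (n - \<alpha>)"
  proof (cases "mF > 0")
    case False
    then have "mF = 0" using mF0 by simp
    then have "NG = 0" using F0 unfolding mF_def NG_def by simp
    then show ?thesis using \<epsilon> \<sigma> by simp
  next
    case True
    have eqF: "lebesgue_integral lebesgue (\<lambda>y. indicator (ball z2 D) y * \<bar>F y\<bar>) = mF"
      unfolding mF_def
    proof (rule Bochner_Integration.integral_cong[OF refl])
      fix y show "indicator (ball z2 D) y * \<bar>F y\<bar> = F y"
        using D(2) out[of y] nn[of y] by (cases "y \<in> \<Omega>") (auto simp: indicator_def)
    qed
    have mFb: "mF \<le> \<kappa> * lam * \<omega> * D ^ DIM('a) / D powr \<alpha>"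
      using fm_int[OF z2 D(1)] eqF unfolding \<omega>_def by simp
    define P where "P = \<kappa> * D ^ DIM('a) / D powr \<alpha>"
    have P: "P > 0" unfolding P_def using \<kappa> D by simp
    have "NG * P \<le> \<epsilon> * \<rho> powr (n - \<alpha>) * mF"
      using Fp True unfolding P_def NG_def mF_def n_def by (simp add: mult.assoc)
    also have "\<dots> \<le> \<epsilon> * \<rho> powr (n - \<alpha>) * (lam * \<omega> * P)"
      using mFb \<epsilon> unfolding P_def by (intro mult_left_mono) (auto simp: field_simps)
    finally have "NG * P \<le> (\<epsilon> * \<rho> powr (n - \<alpha>) * lam * \<omega>) * P" by (simp add: algebra_simps)
    then have "NG \<le> \<epsilon> * \<rho> powr (n - \<alpha>) * lam * \<omega>" using P by simp
    then show ?thesis using \<sigma> lam \<omega> by (simp add: field_simps)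
  qed
  have "(NG / ((\<sigma> * lam) * \<omega>)) powr q \<le> ((\<epsilon> / \<sigma>) * \<rho> powr (n - \<alpha>)) powr q"
    using key NG0 \<sigma> lam \<omega> q1 by (intro powr_mono2) auto
  also have "\<dots> = (\<epsilon> / \<sigma>) powr q * \<rho> ^ DIM('a)"
  proof -
    have "(\<rho> powr (n - \<alpha>)) powr q = \<rho> ^ DIM('a)"
      using n\<alpha> \<rho> unfolding q_def n_def by (simp add: powr_powr powr_realpow)
    moreover have "((\<epsilon> / \<sigma>) * \<rho> powr (n - \<alpha>)) powr q = (\<epsilon> / \<sigma>) powr q * (\<rho> powr (n - \<alpha>)) powr q"
      using powr_mult[of "\<epsilon> / \<sigma>" "\<rho> powr (n - \<alpha>)" q] \<epsilon> \<sigma> by simp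
    ultimately show ?thesis by simp
  qed
  finally have "5 ^ DIM('a) * \<omega> * (NG / ((\<sigma> * lam) * \<omega>)) powr q
      \<le> 5 ^ DIM('a) * \<omega> * ((\<epsilon> / \<sigma>) powr q * \<rho> ^ DIM('a))"
    using \<omega> by (intro mult_left_mono) auto
  then have "ennreal (5 ^ DIM('a) * \<omega> * (NG / ((\<sigma> * lam) * \<omega>)) powr q)
      \<le> ennreal (5 ^ DIM('a) * \<omega> * (\<epsilon> / \<sigma>) powr q * \<rho> ^ DIM('a))"
    by (intro ennreal_leI) (simp add: mult.assoc)
  with W show ?thesis unfolding \<omega>_def q_def n_def by (meson order_trans)
qed


lemma small_case:
  fixes F G :: "'a::euclidean_space \<Rightarrow> real"
  assumes \<alpha>: "0 \<le> \<alpha>" "\<alpha> < real DIM('a)" and ct: "ct \<ge> 1"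
    and Fi: "integrable lebesgue F" and Gi: "integrable lebesgue G"
    and nn: "\<And>x. F x \<ge> 0 \<and> G x \<ge> 0" and outG: "\<And>x. x \<notin> \<Omega> \<Longrightarrow> G x = 0"
    and Oo: "open \<Omega>"
    and A2: "A2_2 \<Omega> r0 F G ct CA ceps"
    and \<xi>: "\<xi> \<in> \<Omega>" and \<rho>: "\<rho> > 0" "4 * \<rho> \<le> r0" and lam: "lam > 0"
    and z1: "z1 \<in> ball \<xi> \<rho>" "frac_max \<alpha> G z1 \<le> ereal lam"
    and z2: "z2 \<in> ball \<xi> \<rho>" "frac_max \<alpha> F z2 \<le> ereal (\<kappa> * lam)"
    and \<epsilon>: "0 < \<epsilon>" "\<epsilon> < 1" and \<kappa>: "0 < \<kappa>" "\<kappa> \<le> 1" and \<kappa>e: "ceps (\<epsilon>/2) * \<kappa> \<le> \<epsilon>/2"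
    and \<sigma>: "\<sigma> > 3 ^ DIM('a) + 4 * 5 ^ DIM('a) * ct * max CA 0"
  shows "emeasure lebesgue {x\<in>\<Omega> \<inter> ball \<xi> \<rho>. frac_max \<alpha> G x > ereal (\<sigma> * lam)}
     \<le> ennreal (5 ^ DIM('a) * unit_ball_vol (real DIM('a)) * (2 * ct * 10 ^ DIM('a)) powr (real DIM('a) / (real DIM('a) - \<alpha>)) *
          (\<epsilon> / \<sigma>) powr (real DIM('a) / (real DIM('a) - \<alpha>)) * \<rho> ^ DIM('a))"
proof -
  define N where "N = DIM('a)"
  define n where "n = real DIM('a)"
  define \<omega> where "\<omega> = unit_ball_vol (real DIM('a))"
  define q where "q = n / (n - \<alpha>)"
  define R where "R = 2 * \<rho>"
  define CA' where "CA' = max CA 0"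
  have \<omega>: "\<omega> > 0" unfolding \<omega>_def by simp
  have n\<alpha>: "n - \<alpha> > 0" using \<alpha> unfolding n_def by simp
  have q1: "q \<ge> 1" unfolding q_def using n\<alpha> \<alpha> by simp
  have CA': "CA' \<ge> 0" "CA \<le> CA'" unfolding CA'_def by auto
  have absG: "(\<lambda>y. \<bar>G y\<bar>) = G" using nn by (auto simp: abs_of_nonneg)
  have absF: "(\<lambda>y. \<bar>F y\<bar>) = F" using nn by (auto simp: abs_of_nonneg)
  have absGy: "\<And>y. \<bar>G y\<bar> = G y" and absFy: "\<And>y. \<bar>F y\<bar> = F y" using nn by (auto simp: abs_of_nonneg)
  have \<sigma>3: "\<sigma> > 3 ^ N" and \<sigma>4: "\<sigma> > 4 * 5 ^ N * ct * CA'"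
  proof -
    have "4 * 5 ^ N * ct * CA' \<ge> 0" using CA' ct by simp
    moreover have "(3::real) ^ N > 0" by simp
    ultimately show "\<sigma> > 3 ^ N" "\<sigma> > 4 * 5 ^ N * ct * CA'"
      using \<sigma> unfolding N_def CA'_def by linarith+
  qed
  have \<rho>\<alpha>: "\<rho> powr \<alpha> > 0" using \<rho> by simp
  have cpos: "ceps (\<epsilon>/2) > 0" using A2 \<epsilon> unfolding A2_2_def by auto
  have xc: "\<xi> \<in> closure \<Omega>" using \<xi> closure_subset by blast
  have Rr: "R \<in> {0<..r0/2}" unfolding R_def using \<rho> by auto
  have "\<forall>\<nu>\<in>closure \<Omega>. \<forall>r\<in>{0<..r0/2}.
        \<exists>\<phi> \<psi>. \<phi> \<in> borel_measurable lebesgue \<and> \<psi> \<in> borel_measurable lebesgue \<and>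
          (AE x in lebesgue. x \<in> \<Omega> \<inter> ball \<nu> r \<longrightarrow> \<phi> x \<ge> 0 \<and> \<psi> x \<ge> 0) \<and>
          compQ G \<phi> \<psi> (\<Omega> \<inter> ball \<nu> r) ct \<and>
          (\<forall>e\<in>{0<..<1}.
             favg (ball \<nu> r) (\<lambda>x. indicator \<Omega> x * \<psi> x)
               \<le> e * favg (ball \<nu> (2*r)) G + ceps e * favg (ball \<nu> (2*r)) F) \<and>
          (AE x in lebesgue. x \<in> \<Omega> \<inter> ball \<nu> r \<longrightarrow>
             \<bar>\<phi> x\<bar> \<le> CA * favg (ball \<nu> (2*r)) (\<lambda>y. G y + F y))"
    using A2 unfolding A2_2_def by (rule conjunct2)
  from bspec[OF bspec[OF this xc] Rr] obtain \<phi> \<psi> where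
     \<phi>m: "\<phi> \<in> borel_measurable lebesgue" and \<psi>m: "\<psi> \<in> borel_measurable lebesgue"
     and nnAE: "AE x in lebesgue. x \<in> \<Omega> \<inter> ball \<xi> R \<longrightarrow> \<phi> x \<ge> 0 \<and> \<psi> x \<ge> 0"
     and Q: "compQ G \<phi> \<psi> (\<Omega> \<inter> ball \<xi> R) ct"
     and E: "\<forall>e\<in>{0<..<1}.
             favg (ball \<xi> R) (\<lambda>x. indicator \<Omega> x * \<psi> x)
               \<le> e * favg (ball \<xi> (2*R)) G + ceps e * favg (ball \<xi> (2*R)) F"
     and L: "AE x in lebesgue. x \<in> \<Omega> \<inter> ball \<xi> R \<longrightarrow>
             \<bar>\<phi> x\<bar> \<le> CA * favg (ball \<xi> (2*R)) (\<lambda>y. G y + F y)"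
    by (elim exE conjE) 
  define Av where "Av = favg (ball \<xi> (2*R)) (\<lambda>y. G y + F y)"
  have ball4: "ball \<xi> (2*R) \<subseteq> ball z (5*\<rho>)" if "z \<in> ball \<xi> \<rho>" for z
  proof
    fix y assume "y \<in> ball \<xi> (2*R)"
    then have "dist \<xi> y < 4*\<rho>" unfolding R_def by simp
    moreover have "dist z \<xi> < \<rho>" using that by (simp add: dist_commute)
    moreover have "dist z y \<le> dist z \<xi> + dist \<xi> y" by (rule dist_triangle)
    ultimately show "y \<in> ball z (5*\<rho>)" by simp
  qed
  have pw: "(5*\<rho>) ^ N / (5*\<rho>) powr \<alpha> \<le> 5 ^ N * \<rho> ^ N / \<rho> powr \<alpha>"
  proof -
    have "\<rho> powr \<alpha> \<le> (5*\<rho>) powr \<alpha>" using \<rho> \<alpha> by (intro powr_mono2) auto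
    then have "5 ^ N * \<rho> ^ N / (5*\<rho>) powr \<alpha> \<le> 5 ^ N * \<rho> ^ N / \<rho> powr \<alpha>"
      using \<rho> by (intro divide_left_mono) auto
    then show ?thesis by (simp add: power_mult_distrib)
  qed
  have bG: "lebesgue_integral lebesgue (\<lambda>y. indicator (ball \<xi> (2*R)) y * G y) \<le> lam * \<omega> * (5 ^ N * \<rho> ^ N / \<rho> powr \<alpha>)"
  proof -
    have "lebesgue_integral lebesgue (\<lambda>y. indicator (ball \<xi> (2*R)) y * G y)
        \<le> lebesgue_integral lebesgue (\<lambda>y. indicator (ball z1 (5*\<rho>)) y * G y)"
      using ball4[OF z1(1)] Gi nn by (intro int_mono_set) auto
    also have "\<dots> \<le> lam * \<omega> * (5*\<rho>) ^ N / (5*\<rho>) powr \<alpha>"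
      using fm_int[OF z1(2), of "5*\<rho>"] \<rho> unfolding \<omega>_def N_def by (simp add: absGy)
    also have "\<dots> \<le> lam * \<omega> * (5 ^ N * \<rho> ^ N / \<rho> powr \<alpha>)"
      using pw lam \<omega> by (simp add: mult.assoc mult_left_mono times_divide_eq_right[symmetric] del: times_divide_eq_right)
    finally show ?thesis .
  qed
  have bF: "lebesgue_integral lebesgue (\<lambda>y. indicator (ball \<xi> (2*R)) y * F y) \<le> \<kappa> * lam * \<omega> * (5 ^ N * \<rho> ^ N / \<rho> powr \<alpha>)"
  proof -
    have "lebesgue_integral lebesgue (\<lambda>y. indicator (ball \<xi> (2*R)) y * F y)
        \<le> lebesgue_integral lebesgue (\<lambda>y. indicator (ball z2 (5*\<rho>)) y * F y)"
      using ball4[OF z2(1)] Fi nn by (intro int_mono_set) auto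
    also have "\<dots> \<le> \<kappa> * lam * \<omega> * (5*\<rho>) ^ N / (5*\<rho>) powr \<alpha>"
      using fm_int[OF z2(2), of "5*\<rho>"] \<rho> unfolding \<omega>_def N_def by (simp add: absFy)
    also have "\<dots> \<le> \<kappa> * lam * \<omega> * (5 ^ N * \<rho> ^ N / \<rho> powr \<alpha>)"
      using pw lam \<omega> \<kappa> by (simp add: mult.assoc mult_left_mono times_divide_eq_right[symmetric] del: times_divide_eq_right)
    finally show ?thesis .
  qed
  have vol2R: "measure lebesgue (ball \<xi> (2*R)) \<ge> \<omega> * \<rho> ^ N"
  proof -
    have "measure lebesgue (ball \<xi> (2*R)) = \<omega> * (4*\<rho>) ^ N"
      using ball_meas[of "2*R" \<xi>] \<rho> unfolding R_def \<omega>_def N_def by simp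
    also have "\<dots> \<ge> \<omega> * \<rho> ^ N" using \<omega> \<rho> by (intro mult_left_mono power_mono) auto
    finally show ?thesis .
  qed
  have favg_le: "favg (ball \<xi> (2*R)) f \<le> X * 5 ^ N / \<rho> powr \<alpha>"
    if fI: "lebesgue_integral lebesgue (\<lambda>y. indicator (ball \<xi> (2*R)) y * f y) \<le> X * \<omega> * (5 ^ N * \<rho> ^ N / \<rho> powr \<alpha>)"
       and fnn: "\<And>y. f y \<ge> 0" for f X
  proof -
    define I where "I = lebesgue_integral lebesgue (\<lambda>y. indicator (ball \<xi> (2*R)) y * f y)"
    have I0: "I \<ge> 0" unfolding I_def using fnn by (intro Bochner_Integration.integral_nonneg) auto
    have pos: "\<omega> * \<rho> ^ N > 0" using \<omega> \<rho> by simp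
    have "favg (ball \<xi> (2*R)) f = I / measure lebesgue (ball \<xi> (2*R))"
      unfolding favg_def set_lebesgue_integral_def I_def by simp
    also have "\<dots> \<le> I / (\<omega> * \<rho> ^ N)"
    proof -
      have "measure lebesgue (ball \<xi> (2*R)) > 0" using vol2R pos by linarith
      then show ?thesis using I0 vol2R pos \<omega> \<rho> by (intro divide_left_mono mult_pos_pos) auto
    qed
    also have "\<dots> \<le> (X * \<omega> * (5 ^ N * \<rho> ^ N / \<rho> powr \<alpha>)) / (\<omega> * \<rho> ^ N)"
      using fI pos unfolding I_def by (intro divide_right_mono) auto
    also have "\<dots> = X * 5 ^ N / \<rho> powr \<alpha>" using \<omega> \<rho> by (simp add: field_simps)
    finally show ?thesis .
  qed
  have fG: "favg (ball \<xi> (2*R)) G \<le> lam * 5 ^ N / \<rho> powr \<alpha>"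
    using favg_le[OF bG] nn by auto
  have fF: "favg (ball \<xi> (2*R)) F \<le> (\<kappa> * lam) * 5 ^ N / \<rho> powr \<alpha>"
    using favg_le[OF bF] nn by auto
  have fAv: "Av \<le> 2 * 5 ^ N * lam / \<rho> powr \<alpha>"
  proof -
    have "lebesgue_integral lebesgue (\<lambda>y. indicator (ball \<xi> (2*R)) y * (G y + F y))
       = lebesgue_integral lebesgue (\<lambda>y. indicator (ball \<xi> (2*R)) y * G y)
         + lebesgue_integral lebesgue (\<lambda>y. indicator (ball \<xi> (2*R)) y * F y)"
    proof -
      have iG: "integrable lebesgue (\<lambda>y. indicator (ball \<xi> (2*R)) y * G y)" by (rule integrable_ind) (auto simp: Gi)
      have iF: "integrable lebesgue (\<lambda>y. indicator (ball \<xi> (2*R)) y * F y)" by (rule integrable_ind) (auto simp: Fi)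
      show ?thesis unfolding distrib_left by (rule Bochner_Integration.integral_add[OF iG iF])
    qed
    also have "\<dots> \<le> lam * \<omega> * (5 ^ N * \<rho> ^ N / \<rho> powr \<alpha>) + \<kappa> * lam * \<omega> * (5 ^ N * \<rho> ^ N / \<rho> powr \<alpha>)"
      using bG bF by linarith
    also have "\<dots> = ((1 + \<kappa>) * lam) * \<omega> * (5 ^ N * \<rho> ^ N / \<rho> powr \<alpha>)"
      by (simp add: algebra_simps add_divide_distrib)
    finally have "Av \<le> ((1 + \<kappa>) * lam) * 5 ^ N / \<rho> powr \<alpha>"
      unfolding Av_def using nn by (intro favg_le) (auto intro: add_nonneg_nonneg)
    also have "\<dots> \<le> 2 * 5 ^ N * lam / \<rho> powr \<alpha>"
      using \<kappa> lam \<rho>\<alpha> by (intro divide_right_mono) (auto simp: field_simps)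
    finally show ?thesis .
  qed
  have Av0: "Av \<ge> 0"
    unfolding Av_def favg_def set_lebesgue_integral_def using nn
    by (intro divide_nonneg_nonneg Bochner_Integration.integral_nonneg) (auto intro: add_nonneg_nonneg)
  define B where "B = ball \<xi> R"
  define \<psi>1 where "\<psi>1 = (\<lambda>y. indicator (\<Omega> \<inter> B) y * \<psi> y)"
  have OB: "\<Omega> \<inter> B \<in> sets lebesgue" unfolding B_def
    using Oo by (intro fmeasurableD lmeasurable_open bounded_Int) auto
  have Bs: "B \<in> sets lebesgue" unfolding B_def by simp
  have AEall: "AE y in lebesgue. y \<in> \<Omega> \<inter> B \<longrightarrow> 0 \<le> \<phi> y \<and> 0 \<le> \<psi> y \<and> G y \<le> ct * (\<phi> y + \<psi> y)
        \<and> \<psi> y \<le> ct * (G y + \<phi> y) \<and> \<bar>\<phi> y\<bar> \<le> CA * Av"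
    using nnAE Q L unfolding compQ_def Av_def B_def by eventually_elim auto
  have CAAv: "CA * Av \<le> CA' * Av" using CA' Av0 by (intro mult_right_mono) auto
  have ptG: "AE y in lebesgue. y \<in> B \<longrightarrow> G y \<le> ct * CA' * Av + ct * \<psi>1 y"
    using AEall
  proof eventually_elim
    case (elim y)
    show ?case
    proof
      assume yB: "y \<in> B"
      show "G y \<le> ct * CA' * Av + ct * \<psi>1 y"
      proof (cases "y \<in> \<Omega>")
        case True
        then have h: "0 \<le> \<phi> y \<and> 0 \<le> \<psi> y \<and> G y \<le> ct * (\<phi> y + \<psi> y) \<and> \<bar>\<phi> y\<bar> \<le> CA * Av"
          using elim yB by auto
        have "\<phi> y \<le> CA' * Av" using h CAAv by linarith
        then have "ct * (\<phi> y + \<psi> y) \<le> ct * (CA' * Av + \<psi> y)" using ct by (intro mult_left_mono) auto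
        moreover have "\<psi>1 y = \<psi> y" unfolding \<psi>1_def using True yB by simp
        ultimately show ?thesis using h by (simp add: algebra_simps)
      next
        case False
        then have "G y = 0" "\<psi>1 y = 0" using outG unfolding \<psi>1_def by auto
        moreover have "ct * CA' * Av \<ge> 0" using ct CA' Av0 by simp
        ultimately show ?thesis by simp
      qed
    qed
  qed
  define bd where "bd = (\<lambda>y. ct * (indicator B y * G y) + (ct * CA' * Av) * indicator B y)"
  have ptPsi: "AE y in lebesgue. 0 \<le> \<psi>1 y \<and> \<psi>1 y \<le> bd y"
    using AEall
  proof eventually_elim
    case (elim y)
    show ?case
    proof (cases "y \<in> \<Omega> \<inter> B")
      case True
      then have h: "0 \<le> \<phi> y \<and> 0 \<le> \<psi> y \<and> \<psi> y \<le> ct * (G y + \<phi> y) \<and> \<bar>\<phi> y\<bar> \<le> CA * Av"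
        using elim by auto
      have "\<phi> y \<le> CA' * Av" using h CAAv by linarith
      then have "ct * (G y + \<phi> y) \<le> ct * (G y + CA' * Av)" using ct by (intro mult_left_mono) auto
      then show ?thesis using h True unfolding \<psi>1_def bd_def by (simp add: algebra_simps)
    next
      case False
      then have "\<psi>1 y = 0" unfolding \<psi>1_def by simp
      moreover have "bd y \<ge> 0" unfolding bd_def using ct CA' Av0 nn[of y]
        by (auto intro!: add_nonneg_nonneg mult_nonneg_nonneg)
      ultimately show ?thesis by simp
    qed
  qed
  have \<psi>1m: "\<psi>1 \<in> borel_measurable lebesgue" unfolding \<psi>1_def
    using \<psi>m OB by (intro borel_measurable_times borel_measurable_indicator)
  have bdi: "integrable lebesgue bd" unfolding bd_def
  proof (intro Bochner_Integration.integrable_add integrable_mult_right integrable_ind Gi integrable_real_indicator Bs)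
    have "emeasure lebesgue B = ennreal (unit_ball_vol (real DIM('a)) * R ^ DIM('a))"
      unfolding B_def by (rule emeasure_ball_leb) (use \<rho> R_def in simp)
    then show "emeasure lebesgue B < \<infinity>" by simp
  qed
  have \<psi>1i: "integrable lebesgue \<psi>1"
  proof (rule Bochner_Integration.integrable_bound[OF bdi \<psi>1m])
    show "AE x in lebesgue. norm (\<psi>1 x) \<le> norm (bd x)" using ptPsi by eventually_elim auto
  qed
  define NP where "NP = lebesgue_integral lebesgue (\<lambda>y. \<bar>\<psi>1 y\<bar>)"
  have NPeq: "NP = lebesgue_integral lebesgue \<psi>1"
    unfolding NP_def using \<psi>1m ptPsi by (intro integral_cong_AE) (auto elim: eventually_mono)
  have measB: "measure lebesgue B = \<omega> * 2 ^ N * \<rho> ^ N"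
    using ball_meas[of R \<xi>] \<rho> unfolding B_def R_def \<omega>_def N_def by (simp add: power_mult_distrib)
  have "lebesgue_integral lebesgue \<psi>1 = favg B (\<lambda>x. indicator \<Omega> x * \<psi> x) * measure lebesgue B"
  proof -
    have "lebesgue_integral lebesgue \<psi>1 = (LINT x:B|lebesgue. indicator \<Omega> x * \<psi> x)"
      unfolding \<psi>1_def set_lebesgue_integral_def by (simp add: indicator_inter_arith mult_ac)
    moreover have "measure lebesgue B > 0" using measB \<omega> \<rho> by simp
    ultimately show ?thesis unfolding favg_def by simp
  qed
  moreover have "favg B (\<lambda>x. indicator \<Omega> x * \<psi> x) \<le> \<epsilon> * 5 ^ N * lam / \<rho> powr \<alpha>"
  proof -
    have "favg B (\<lambda>x. indicator \<Omega> x * \<psi> x) \<le> (\<epsilon>/2) * favg (ball \<xi> (2*R)) G + ceps (\<epsilon>/2) * favg (ball \<xi> (2*R)) F"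
      using bspec[OF E, of "\<epsilon>/2"] \<epsilon> unfolding B_def by auto
    also have "\<dots> \<le> (\<epsilon>/2) * (lam * 5 ^ N / \<rho> powr \<alpha>) + ceps (\<epsilon>/2) * ((\<kappa> * lam) * 5 ^ N / \<rho> powr \<alpha>)"
      using fG fF \<epsilon> cpos by (intro add_mono mult_left_mono) auto
    also have "\<dots> = (\<epsilon>/2) * (lam * 5 ^ N / \<rho> powr \<alpha>) + (ceps (\<epsilon>/2) * \<kappa>) * (lam * 5 ^ N / \<rho> powr \<alpha>)"
      by (simp add: field_simps)
    also have "\<dots> \<le> (\<epsilon>/2) * (lam * 5 ^ N / \<rho> powr \<alpha>) + (\<epsilon>/2) * (lam * 5 ^ N / \<rho> powr \<alpha>)"
      using \<kappa>e lam \<rho>\<alpha> by (intro add_mono mult_right_mono) auto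
    also have "\<dots> = \<epsilon> * 5 ^ N * lam / \<rho> powr \<alpha>" by (simp add: field_simps)
    finally show ?thesis .
  qed
  ultimately have NPb: "NP \<le> (\<epsilon> * 5 ^ N * lam / \<rho> powr \<alpha>) * (\<omega> * 2 ^ N * \<rho> ^ N)"
    using NPeq measB \<omega> \<rho> by (metis mult_right_mono measure_nonneg)
  define t where "t = \<sigma> * lam / (2 * ct)"
  have \<sigma>pos: "\<sigma> > 0" using \<sigma>3 by (smt (verit) zero_less_power)
  have t: "t > 0" unfolding t_def using \<sigma>pos lam ct by simp
  have AvP: "Av * \<rho> powr \<alpha> \<le> 2 * 5 ^ N * lam" using fAv \<rho>\<alpha> by (simp add: field_simps)
  have cond: "\<exists>r>0. t * \<omega> * r powr (n - \<alpha>) < lebesgue_integral lebesgue (\<lambda>y. indicator (ball x r) y * \<bar>\<psi>1 y\<bar>)"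
    if x: "x \<in> {x\<in>\<Omega> \<inter> ball \<xi> \<rho>. frac_max \<alpha> G x > ereal (\<sigma> * lam)}" for x
  proof -
    obtain r where r: "r > 0" and rI: "\<sigma> * lam * \<omega> * r ^ N / r powr \<alpha>
           < lebesgue_integral lebesgue (\<lambda>y. indicator (ball x r) y * G y)"
      using fm_gt_int[of "\<sigma> * lam" \<alpha> G x] x unfolding \<omega>_def N_def by (auto simp: absGy)
    define V where "V = \<omega> * r ^ N"
    define P where "P = r powr \<alpha>"
    define Z where "Z = lam * V / P"
    have V: "V > 0" unfolding V_def using \<omega> r by simp
    have P: "P > 0" unfolding P_def using r by simp
    have Z: "Z > 0" unfolding Z_def using V P lam by simp
    have lhs: "\<sigma> * lam * \<omega> * r ^ N / r powr \<alpha> = \<sigma> * Z" unfolding Z_def V_def P_def by simp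
    have xb: "dist \<xi> x < \<rho>" using x by auto
    have "r < \<rho>"
    proof (rule ccontr)
      assume "\<not> r < \<rho>"
      then have r\<rho>: "\<rho> \<le> r" by simp
      have sub: "ball x r \<subseteq> ball z1 (3*r)"
      proof
        fix y assume "y \<in> ball x r"
        then have "dist x y < r" by simp
        moreover have "dist z1 \<xi> < \<rho>" using z1 by (simp add: dist_commute)
        moreover have "dist z1 y \<le> dist z1 \<xi> + dist \<xi> x + dist x y"
          using dist_triangle[of z1 y \<xi>] dist_triangle[of \<xi> y x] by linarith
        ultimately show "y \<in> ball z1 (3*r)" using xb r\<rho> by simp
      qed
      have "lebesgue_integral lebesgue (\<lambda>y. indicator (ball x r) y * G y)
          \<le> lebesgue_integral lebesgue (\<lambda>y. indicator (ball z1 (3*r)) y * G y)"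
        using sub Gi nn by (intro int_mono_set) auto
      also have "\<dots> \<le> lam * \<omega> * (3*r) ^ N / (3*r) powr \<alpha>"
        using fm_int[OF z1(2), of "3*r"] r unfolding \<omega>_def N_def by (simp add: absGy)
      also have "\<dots> \<le> lam * \<omega> * (3 ^ N * r ^ N / r powr \<alpha>)"
      proof -
        have "r powr \<alpha> \<le> (3*r) powr \<alpha>" using r \<alpha> by (intro powr_mono2) auto
        then have "3 ^ N * r ^ N / (3*r) powr \<alpha> \<le> 3 ^ N * r ^ N / r powr \<alpha>"
          using r by (intro divide_left_mono) auto
        then have "(3*r) ^ N / (3*r) powr \<alpha> \<le> 3 ^ N * r ^ N / r powr \<alpha>" by (simp add: power_mult_distrib)
        then show ?thesis using lam \<omega>
          by (simp add: mult.assoc mult_left_mono times_divide_eq_right[symmetric] del: times_divide_eq_right)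
      qed
      also have "\<dots> = 3 ^ N * Z" unfolding Z_def V_def P_def by (simp add: field_simps)
      finally have "\<sigma> * Z < 3 ^ N * Z" using rI lhs by linarith
      then have "\<sigma> < 3 ^ N" using Z by simp
      then show False using \<sigma>3 by simp
    qed
    have subB: "ball x r \<subseteq> B"
    proof
      fix y assume "y \<in> ball x r"
      then have "dist x y < r" by simp
      moreover have "dist \<xi> y \<le> dist \<xi> x + dist x y" by (rule dist_triangle)
      ultimately show "y \<in> B" unfolding B_def R_def using xb \<open>r < \<rho>\<close> by simp
    qed
    define J where "J = lebesgue_integral lebesgue (\<lambda>y. indicator (ball x r) y * \<bar>\<psi>1 y\<bar>)"
    have iP: "integrable lebesgue (\<lambda>y. indicator (ball x r) y * \<psi>1 y)"
      by (rule integrable_ind) (auto simp: \<psi>1i)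
    have iPa: "integrable lebesgue (\<lambda>y. indicator (ball x r) y * \<bar>\<psi>1 y\<bar>)"
      by (rule integrable_ind) (auto simp: \<psi>1i)
    have iI: "integrable lebesgue (indicator (ball x r) :: 'a \<Rightarrow> real)"
    proof (rule integrable_real_indicator)
      have "emeasure lebesgue (ball x r) = ennreal (unit_ball_vol (real DIM('a)) * r ^ DIM('a))"
        by (rule emeasure_ball_leb) (use r in simp)
      then show "emeasure lebesgue (ball x r) < \<infinity>" by simp
    qed simp
    have "lebesgue_integral lebesgue (\<lambda>y. indicator (ball x r) y * G y)
        \<le> lebesgue_integral lebesgue (\<lambda>y. (ct * CA' * Av) * indicator (ball x r) y + ct * (indicator (ball x r) y * \<psi>1 y))"
    proof (rule integral_mono_AE)
      show "integrable lebesgue (\<lambda>y. indicator (ball x r) y * G y)"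
        by (rule integrable_ind) (auto simp: Gi)
      show "integrable lebesgue (\<lambda>y. (ct * CA' * Av) * indicator (ball x r) y + ct * (indicator (ball x r) y * \<psi>1 y))"
        using iI iP by (intro Bochner_Integration.integrable_add integrable_mult_right)
      show "AE y in lebesgue. indicator (ball x r) y * G y \<le> (ct * CA' * Av) * indicator (ball x r) y + ct * (indicator (ball x r) y * \<psi>1 y)"
        using ptG
      proof eventually_elim
        case (elim y)
        then show ?case using subB by (cases "y \<in> ball x r") (auto simp: indicator_def algebra_simps)
      qed
    qed
    also have "\<dots> = (ct * CA' * Av) * V + ct * lebesgue_integral lebesgue (\<lambda>y. indicator (ball x r) y * \<psi>1 y)"
    proof -
      have "lebesgue_integral lebesgue (\<lambda>y. (ct * CA' * Av) * indicator (ball x r) y + ct * (indicator (ball x r) y * \<psi>1 y))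
          = (ct * CA' * Av) * lebesgue_integral lebesgue (indicator (ball x r) :: 'a \<Rightarrow> real)
            + ct * lebesgue_integral lebesgue (\<lambda>y. indicator (ball x r) y * \<psi>1 y)"
        using iI iP by (simp add: Bochner_Integration.integral_add)
      moreover have "lebesgue_integral lebesgue (indicator (ball x r) :: 'a \<Rightarrow> real) = V"
        using ball_meas[of r x] r unfolding V_def \<omega>_def N_def by simp
      ultimately show ?thesis by simp
    qed
    also have "\<dots> \<le> (ct * CA' * Av) * V + ct * J"
    proof -
      have "lebesgue_integral lebesgue (\<lambda>y. indicator (ball x r) y * \<psi>1 y) \<le> J"
        unfolding J_def using iP iPa by (intro integral_mono) (auto simp: indicator_def)
      then show ?thesis using ct by simp
    qed
    finally have main: "\<sigma> * Z < (ct * CA' * Av) * V + ct * J" using rI lhs by linarith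
    have "P \<le> \<rho> powr \<alpha>" unfolding P_def using r \<open>r < \<rho>\<close> \<alpha> by (intro powr_mono2) auto
    then have "Av * P \<le> 2 * 5 ^ N * lam" using AvP Av0 by (meson mult_left_mono order_trans)
    then have "Av * V \<le> 2 * 5 ^ N * Z" unfolding Z_def using P V by (simp add: field_simps)
    then have "(ct * CA') * (Av * V) \<le> (ct * CA') * (2 * 5 ^ N * Z)"
      using ct CA' by (intro mult_left_mono) auto
    moreover have "(4 * 5 ^ N * ct * CA') * Z \<le> \<sigma> * Z" using \<sigma>4 Z by (intro mult_right_mono) auto
    ultimately have "(ct * CA' * Av) * V \<le> \<sigma> * Z / 2" by (simp add: algebra_simps)
    then have "\<sigma> * Z / 2 < ct * J" using main by linarith
    then have "\<sigma> * Z / (2 * ct) < J" using ct by (simp add: field_simps)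
    moreover have "t * \<omega> * r powr (n - \<alpha>) = \<sigma> * Z / (2 * ct)"
    proof -
      have "r powr (n - \<alpha>) = r ^ N / r powr \<alpha>" using pow_div_powr[OF r, of N \<alpha>] unfolding n_def N_def by simp
      then show ?thesis unfolding t_def Z_def V_def P_def by (simp add: field_simps)
    qed
    ultimately show ?thesis using r unfolding J_def by auto
  qed
  have W: "emeasure lebesgue {x\<in>\<Omega> \<inter> ball \<xi> \<rho>. frac_max \<alpha> G x > ereal (\<sigma> * lam)}
      \<le> ennreal (5 ^ N * \<omega> * (NP / (t * \<omega>)) powr q)"
    using weak_type[OF \<psi>1i \<alpha> t, of "{x\<in>\<Omega> \<inter> ball \<xi> \<rho>. frac_max \<alpha> G x > ereal (\<sigma> * lam)}"] cond
    unfolding NP_def N_def \<omega>_def q_def n_def by blast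
  have NP0: "NP \<ge> 0" unfolding NP_def by simp
  have key: "NP / (t * \<omega>) \<le> (2 * ct * 10 ^ N) * (\<epsilon> / \<sigma>) * \<rho> powr (n - \<alpha>)"
  proof -
    have "NP / (t * \<omega>) \<le> ((\<epsilon> * 5 ^ N * lam / \<rho> powr \<alpha>) * (\<omega> * 2 ^ N * \<rho> ^ N)) / (t * \<omega>)"
      using NPb t \<omega> by (intro divide_right_mono) auto
    also have "\<dots> = (2 * ct * 10 ^ N) * (\<epsilon> / \<sigma>) * (\<rho> ^ N / \<rho> powr \<alpha>)"
    proof -
      have "(10::real) ^ N = 5 ^ N * 2 ^ N" by (simp add: power_mult_distrib[symmetric])
      then show ?thesis unfolding t_def using \<omega> lam \<sigma>pos ct \<rho>\<alpha> by (simp add: field_simps)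
    qed
    also have "\<rho> ^ N / \<rho> powr \<alpha> = \<rho> powr (n - \<alpha>)"
      using pow_div_powr[OF \<rho>(1), of N \<alpha>] unfolding n_def N_def by simp
    finally show ?thesis .
  qed
  have "(NP / (t * \<omega>)) powr q \<le> ((2 * ct * 10 ^ N) * (\<epsilon> / \<sigma>) * \<rho> powr (n - \<alpha>)) powr q"
    using key NP0 t \<omega> q1 by (intro powr_mono2) auto
  also have "\<dots> = (2 * ct * 10 ^ N) powr q * (\<epsilon> / \<sigma>) powr q * \<rho> ^ N"
  proof -
    have e1: "(\<rho> powr (n - \<alpha>)) powr q = \<rho> ^ N"
      using n\<alpha> \<rho> unfolding q_def n_def N_def by (simp add: powr_powr powr_realpow)
    have "((2 * ct * 10 ^ N) * (\<epsilon> / \<sigma>) * \<rho> powr (n - \<alpha>)) powr q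
        = ((2 * ct * 10 ^ N) * (\<epsilon> / \<sigma>)) powr q * (\<rho> powr (n - \<alpha>)) powr q"
      using powr_mult[of "(2 * ct * 10 ^ N) * (\<epsilon> / \<sigma>)" "\<rho> powr (n - \<alpha>)" q] \<epsilon> \<sigma>pos ct by simp
    also have "((2 * ct * 10 ^ N) * (\<epsilon> / \<sigma>)) powr q = (2 * ct * 10 ^ N) powr q * (\<epsilon> / \<sigma>) powr q"
      using powr_mult[of "2 * ct * 10 ^ N" "\<epsilon> / \<sigma>" q] \<epsilon> \<sigma>pos ct by simp
    finally show ?thesis using e1 by simp
  qed
  finally have "5 ^ N * \<omega> * (NP / (t * \<omega>)) powr q
      \<le> 5 ^ N * \<omega> * ((2 * ct * 10 ^ N) powr q * (\<epsilon> / \<sigma>) powr q * \<rho> ^ N)"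
    using \<omega> by (intro mult_left_mono) auto
  then have "ennreal (5 ^ N * \<omega> * (NP / (t * \<omega>)) powr q)
      \<le> ennreal (5 ^ N * \<omega> * (2 * ct * 10 ^ N) powr q * (\<epsilon> / \<sigma>) powr q * \<rho> ^ N)"
    by (intro ennreal_leI) (simp add: mult.assoc)
  with W show ?thesis unfolding \<omega>_def q_def n_def N_def by (meson order_trans)
qed


lemma inner:
  fixes \<Omega> :: "(real^'n) set" and F G :: "real^'n \<Rightarrow> real"
  assumes ct1: "ct \<ge> 1" and \<alpha>: "0 \<le> \<alpha>" "\<alpha> < real CARD('n)"
    and C_def: "C = 5 ^ CARD('n) * unit_ball_vol (real CARD('n)) * (2 * ct * 10 ^ CARD('n)) powr (real CARD('n) / (real CARD('n) - \<alpha>))"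
    and \<sigma>0_def: "\<sigma>0 = 3 ^ CARD('n) + 4 * 5 ^ CARD('n) * ct * max CA 0"
    and Oo: "open \<Omega>" and Ob: "bounded \<Omega>" and r0: "r0 > 0"
    and Fi: "integrable lebesgue F" and Gi: "integrable lebesgue G"
    and nn: "\<forall>x. F x \<ge> 0 \<and> G x \<ge> 0" and out: "\<forall>x. x \<notin> \<Omega> \<longrightarrow> F x = 0 \<and> G x = 0"
    and A2: "A2_2 \<Omega> r0 F G ct CA ceps"
    and glob: "favg \<Omega> G \<le> Cstar * favg \<Omega> F"
  shows "\<forall>\<epsilon>\<in>{0<..<1}. \<exists>\<kappa>. 0 < \<kappa> \<and> \<kappa> < \<epsilon> \<and>
           (\<forall>\<xi>\<in>\<Omega>. \<forall>\<rho>>0. \<forall>lam>0.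
              (\<exists>z1\<in>\<Omega> \<inter> ball \<xi> \<rho>. \<exists>z2\<in>\<Omega> \<inter> ball \<xi> \<rho>.
                 frac_max \<alpha> G z1 \<le> ereal lam \<and> frac_max \<alpha> F z2 \<le> ereal (\<kappa> * lam))
              \<longrightarrow> (\<forall>\<sigma>>\<sigma>0.
                    dist_fn \<alpha> G (\<Omega> \<inter> ball \<xi> \<rho>) (\<sigma> * lam)
                      \<le> ennreal (C * (\<epsilon> / \<sigma>) powr (real CARD('n) / (real CARD('n) - \<alpha>))
                                   * \<rho> ^ CARD('n))))"
proof (intro ballI)
  fix \<epsilon> :: real assume "\<epsilon> \<in> {0<..<1}"
  then have \<epsilon>: "0 < \<epsilon>" "\<epsilon> < 1" by auto
  define N where "N = CARD('n)"
  define n where "n = real CARD('n)"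
  define \<omega> where "\<omega> = unit_ball_vol (real CARD('n))"
  define q where "q = n / (n - \<alpha>)"
  have DIMe: "DIM(real^'n) = CARD('n)" by simp
  have \<omega>: "\<omega> > 0" unfolding \<omega>_def by simp
  have n\<alpha>: "n - \<alpha> > 0" using \<alpha> unfolding n_def by simp
  have q0: "q \<ge> 0" unfolding q_def using n\<alpha> \<alpha> n_def by simp
  have C1: "5 ^ N * \<omega> \<le> C"
  proof -
    have "(1::real) * 1 \<le> (2 * ct) * 10 ^ N" using ct1 by (intro mult_mono) auto
    then have "1 \<le> (2 * ct * 10 ^ N) powr q"
      using q0 by (intro ge_one_powr_ge_zero) auto
    then have "5 ^ N * \<omega> * 1 \<le> 5 ^ N * \<omega> * (2 * ct * 10 ^ N) powr q"
      using \<omega> by (intro mult_left_mono) auto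
    then show ?thesis unfolding C_def N_def \<omega>_def q_def n_def by simp
  qed
  obtain Bd where Bd: "Bd > 0" "\<Omega> \<subseteq> ball 0 Bd" using bounded_subset_ballD[OF Ob] by blast
  define D where "D = 2 * Bd"
  have D: "D > 0" unfolding D_def using Bd by simp
  have DO: "\<Omega> \<subseteq> ball z D" if "z \<in> \<Omega>" for z
  proof
    fix y assume "y \<in> \<Omega>"
    then have "dist 0 y < Bd" "dist 0 z < Bd" using Bd that by auto
    moreover have "dist z y \<le> dist 0 z + dist 0 y" using dist_triangle[of z y 0] by (simp add: dist_commute)
    ultimately show "y \<in> ball z D" unfolding D_def by simp
  qed
  define mF where "mF = lebesgue_integral lebesgue F"
  define NG where "NG = lebesgue_integral lebesgue G"
  have NG0: "NG \<ge> 0" unfolding NG_def using nn by (simp add: Bochner_Integration.integral_nonneg)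
  have cpos: "ceps (\<epsilon>/2) > 0" using A2 \<epsilon> unfolding A2_2_def by auto
  define \<kappa>3 where "\<kappa>3 = (if mF > 0 then \<epsilon> * (r0/4) powr (n - \<alpha>) * mF * D powr \<alpha> / (D ^ N * (NG + 1)) else 1)"
  have \<kappa>3: "\<kappa>3 > 0" unfolding \<kappa>3_def using \<epsilon> r0 D NG0 by simp
  define \<kappa> where "\<kappa> = min (\<epsilon>/2) (min (\<epsilon> / (2 * ceps (\<epsilon>/2))) \<kappa>3)"
  have \<kappa>: "0 < \<kappa>" "\<kappa> < \<epsilon>" "\<kappa> \<le> 1" unfolding \<kappa>_def using \<epsilon> cpos \<kappa>3 by auto
  have \<kappa>e: "ceps (\<epsilon>/2) * \<kappa> \<le> \<epsilon>/2"
  proof -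
    have "\<kappa> \<le> \<epsilon> / (2 * ceps (\<epsilon>/2))" unfolding \<kappa>_def by simp
    then show ?thesis using cpos by (simp add: field_simps)
  qed
  show "\<exists>\<kappa>. 0 < \<kappa> \<and> \<kappa> < \<epsilon> \<and>
           (\<forall>\<xi>\<in>\<Omega>. \<forall>\<rho>>0. \<forall>lam>0.
              (\<exists>z1\<in>\<Omega> \<inter> ball \<xi> \<rho>. \<exists>z2\<in>\<Omega> \<inter> ball \<xi> \<rho>.
                 frac_max \<alpha> G z1 \<le> ereal lam \<and> frac_max \<alpha> F z2 \<le> ereal (\<kappa> * lam))
              \<longrightarrow> (\<forall>\<sigma>>\<sigma>0.
                    dist_fn \<alpha> G (\<Omega> \<inter> ball \<xi> \<rho>) (\<sigma> * lam)
                      \<le> ennreal (C * (\<epsilon> / \<sigma>) powr (real CARD('n) / (real CARD('n) - \<alpha>))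
                                   * \<rho> ^ CARD('n))))"
  proof (intro exI[of _ \<kappa>] conjI \<kappa>(1) \<kappa>(2) ballI allI impI)
    fix \<xi> \<rho> lam \<sigma>
    assume \<xi>: "\<xi> \<in> \<Omega>" and \<rho>: "0 < \<rho>" and lam: "0 < lam"
      and ex: "\<exists>z1\<in>\<Omega> \<inter> ball \<xi> \<rho>. \<exists>z2\<in>\<Omega> \<inter> ball \<xi> \<rho>.
              frac_max \<alpha> G z1 \<le> ereal lam \<and> frac_max \<alpha> F z2 \<le> ereal (\<kappa> * lam)"
      and \<sigma>: "\<sigma>0 < \<sigma>"
    obtain z1 z2 where z1: "z1 \<in> \<Omega>" "z1 \<in> ball \<xi> \<rho>" "frac_max \<alpha> G z1 \<le> ereal lam"
      and z2: "z2 \<in> \<Omega>" "z2 \<in> ball \<xi> \<rho>" "frac_max \<alpha> F z2 \<le> ereal (\<kappa> * lam)"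
      using ex by blast
    have \<sigma>': "\<sigma> > 3 ^ CARD('n) + 4 * 5 ^ CARD('n) * ct * max CA 0" using \<sigma> \<sigma>0_def by simp
    have \<sigma>pos: "\<sigma> > 0"
    proof -
      have "4 * 5 ^ CARD('n) * ct * max CA 0 \<ge> 0" using ct1 by simp
      moreover have "(3::real) ^ CARD('n) > 0" by simp
      ultimately show ?thesis using \<sigma>' by linarith
    qed
    have nn': "\<And>x. F x \<ge> 0 \<and> G x \<ge> 0" using nn by auto
    have outG: "\<And>x. x \<notin> \<Omega> \<Longrightarrow> G x = 0" and outF: "\<And>x. x \<notin> \<Omega> \<Longrightarrow> F x = 0" using out by auto
    have \<alpha>': "\<alpha> < real DIM(real^'n)" using \<alpha> by simp
    show "dist_fn \<alpha> G (\<Omega> \<inter> ball \<xi> \<rho>) (\<sigma> * lam)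
       \<le> ennreal (C * (\<epsilon> / \<sigma>) powr (real CARD('n) / (real CARD('n) - \<alpha>)) * \<rho> ^ CARD('n))"
    proof (cases "4 * \<rho> \<le> r0")
      case True
      have "emeasure lebesgue {x\<in>\<Omega> \<inter> ball \<xi> \<rho>. frac_max \<alpha> G x > ereal (\<sigma> * lam)}
        \<le> ennreal (5 ^ CARD('n) * unit_ball_vol (real CARD('n)) * (2 * ct * 10 ^ CARD('n)) powr (real CARD('n) / (real CARD('n) - \<alpha>)) *
          (\<epsilon> / \<sigma>) powr (real CARD('n) / (real CARD('n) - \<alpha>)) * \<rho> ^ CARD('n))"
        using small_case[where 'a="real^'n", unfolded DIMe, OF \<alpha>(1) \<alpha>(2) ct1 Fi Gi nn' outG Oo A2 \<xi> \<rho> True lam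
            z1(2) z1(3) z2(2) z2(3) \<epsilon> \<kappa>(1) \<kappa>(3) \<kappa>e \<sigma>'] .
      then show ?thesis unfolding dist_fn_def C_def .
    next
      case False
      then have \<rho>4: "r0 / 4 \<le> \<rho>" by simp
      have F0: "lebesgue_integral lebesgue G = 0" if mF0: "lebesgue_integral lebesgue F = 0"
      proof -
        have iF: "(LINT x:\<Omega>|lebesgue. F x) = lebesgue_integral lebesgue F"
          unfolding set_lebesgue_integral_def
          by (rule Bochner_Integration.integral_cong) (use outF in \<open>auto simp: indicator_def\<close>)
        have iG: "(LINT x:\<Omega>|lebesgue. G x) = lebesgue_integral lebesgue G"
          unfolding set_lebesgue_integral_def
          by (rule Bochner_Integration.integral_cong) (use outG in \<open>auto simp: indicator_def\<close>)
        obtain e where e: "e > 0" "ball \<xi> e \<subseteq> \<Omega>" using Oo \<xi> open_contains_ball by blast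
        have "measure lebesgue (ball \<xi> e) \<le> measure lebesgue \<Omega>"
          using e Oo Ob by (intro measure_mono_fmeasurable lmeasurable_open) auto
        moreover have "measure lebesgue (ball \<xi> e) > 0" using ball_meas[of e \<xi>] e by simp
        ultimately have m: "measure lebesgue \<Omega> > 0" by linarith
        have "favg \<Omega> F = 0" unfolding favg_def iF mF0 by simp
        then have "favg \<Omega> G \<le> 0" using glob by simp
        then have "lebesgue_integral lebesgue G \<le> 0" unfolding favg_def iG using m
          by (simp add: divide_le_0_iff)
        then show ?thesis using NG0 unfolding NG_def by simp
      qed
      have Fp: "lebesgue_integral lebesgue G * \<kappa> * D ^ CARD('n) / D powr \<alpha>
          \<le> \<epsilon> * \<rho> powr (real CARD('n) - \<alpha>) * lebesgue_integral lebesgue F"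
        if mFp: "lebesgue_integral lebesgue F > 0"
      proof -
        define W where "W = D ^ N / D powr \<alpha>"
        have W: "W > 0" unfolding W_def using D by simp
        have mF: "mF > 0" using mFp unfolding mF_def .
        have k3: "\<kappa>3 = \<epsilon> * (r0/4) powr (n - \<alpha>) * mF * D powr \<alpha> / (D ^ N * (NG + 1))"
          unfolding \<kappa>3_def using mF by simp
        have "\<kappa> \<le> \<kappa>3" unfolding \<kappa>_def by simp
        then have "NG * \<kappa> * W \<le> NG * \<kappa>3 * W" using NG0 W by (intro mult_right_mono mult_left_mono) auto
        also have "\<dots> = \<epsilon> * (r0/4) powr (n - \<alpha>) * mF * (NG / (NG + 1))"
        proof -
          have h1: "D ^ N > 0" "D powr \<alpha> > 0" "NG + 1 > 0" using D NG0 by auto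
          define a where "a = \<epsilon> * (r0/4) powr (n - \<alpha>) * mF"
          have "NG * \<kappa>3 * W = a * (NG / (NG + 1)) * ((D powr \<alpha> / D ^ N) * (D ^ N / D powr \<alpha>))"
            unfolding k3 W_def a_def by (simp add: divide_simps)
          also have "(D powr \<alpha> / D ^ N) * (D ^ N / D powr \<alpha>) = 1" using h1 by simp
          finally show ?thesis unfolding a_def by simp
        qed
        also have "\<dots> \<le> \<epsilon> * (r0/4) powr (n - \<alpha>) * mF * 1"
          using NG0 \<epsilon> mF by (intro mult_left_mono) auto
        also have "\<dots> \<le> \<epsilon> * \<rho> powr (n - \<alpha>) * mF"
        proof -
          have "(r0/4) powr (n - \<alpha>) \<le> \<rho> powr (n - \<alpha>)" using \<rho>4 r0 n\<alpha> by (intro powr_mono2) auto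
          then show ?thesis using \<epsilon> mF by (simp add: mult_left_mono mult_right_mono)
        qed
        finally show ?thesis unfolding W_def mF_def NG_def n_def N_def by (simp add: mult.assoc)
      qed
      have "emeasure lebesgue {x\<in>\<Omega> \<inter> ball \<xi> \<rho>. frac_max \<alpha> G x > ereal (\<sigma> * lam)}
        \<le> ennreal (5 ^ CARD('n) * unit_ball_vol (real CARD('n)) *
          (\<epsilon> / \<sigma>) powr (real CARD('n) / (real CARD('n) - \<alpha>)) * \<rho> ^ CARD('n))"
        using large_case[where 'a="real^'n", unfolded DIMe, OF \<alpha>(1) \<alpha>(2) Fi Gi nn' outF D DO[OF z2(1)] z2(3)
           lam \<sigma>pos \<kappa>(1) \<rho> \<epsilon>(1) F0 Fp] .
      also have "\<dots> \<le> ennreal (C * (\<epsilon> / \<sigma>) powr (real CARD('n) / (real CARD('n) - \<alpha>)) * \<rho> ^ CARD('n))"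
        using C1 \<rho> unfolding N_def \<omega>_def
        by (intro ennreal_leI mult_right_mono) auto
      finally show ?thesis unfolding dist_fn_def .
    qed
  qed
qed


theorem mainTheorem8:
  fixes ct :: real
  assumes dim: "CARD('n::finite) \<ge> 2"
    and ct1: "ct \<ge> 1"
  shows
   "\<forall>\<alpha>\<in>{0..<real CARD('n)}. \<exists>C>0. \<forall>CA::real. \<exists>\<sigma>0>0.
      \<forall>(\<Omega>::(real^'n) set) r0 (F::real^'n \<Rightarrow> real) (G::real^'n \<Rightarrow> real) ceps Cstar.
        open \<Omega> \<and> bounded \<Omega> \<and> r0 > 0 \<and>
        integrable lebesgue F \<and> integrable lebesgue G \<and>
        (\<forall>x. F x \<ge> 0 \<and> G x \<ge> 0) \<and> (\<forall>x. x \<notin> \<Omega> \<longrightarrow> F x = 0 \<and> G x = 0) \<and>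
        A2_2 \<Omega> r0 F G ct CA ceps \<and>
        favg \<Omega> G \<le> Cstar * favg \<Omega> F
        \<longrightarrow>
        (\<forall>\<epsilon>\<in>{0<..<1}. \<exists>\<kappa>. 0 < \<kappa> \<and> \<kappa> < \<epsilon> \<and>
           (\<forall>\<xi>\<in>\<Omega>. \<forall>\<rho>>0. \<forall>lam>0.
              (\<exists>z1\<in>\<Omega> \<inter> ball \<xi> \<rho>. \<exists>z2\<in>\<Omega> \<inter> ball \<xi> \<rho>.
                 frac_max \<alpha> G z1 \<le> ereal lam \<and> frac_max \<alpha> F z2 \<le> ereal (\<kappa> * lam))
              \<longrightarrow> (\<forall>\<sigma>>\<sigma>0.
                    dist_fn \<alpha> G (\<Omega> \<inter> ball \<xi> \<rho>) (\<sigma> * lam)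
                      \<le> ennreal (C * (\<epsilon> / \<sigma>) powr (real CARD('n) / (real CARD('n) - \<alpha>))
                                   * \<rho> ^ CARD('n)))))"
  apply (intro ballI)
  subgoal for \<alpha>
    apply (rule exI[of _ "5 ^ CARD('n) * unit_ball_vol (real CARD('n)) * (2 * ct * 10 ^ CARD('n)) powr (real CARD('n) / (real CARD('n) - \<alpha>))"])
    apply (intro conjI allI)
    subgoal using ct1 by simp
    subgoal for CA
      apply (rule exI[of _ "3 ^ CARD('n) + 4 * 5 ^ CARD('n) * ct * max CA 0"])
      apply (intro conjI allI impI)
      subgoal using ct1 by (intro add_pos_nonneg) auto
      subgoal for \<Omega> r0 F G ceps Cstar
        apply (elim conjE)
        apply (rule inner[OF ct1 _ _ refl refl])
        apply auto
        done
      done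
    done
  done

end
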